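(* Let $m,p,n$ be positive integers with $p\mid m$, and let $g\in G(m,p,n)$ be $p$-connected and not a diagonal reflection. Then there exists a reflection $s\in G(m,p,n)$ with $s\le_\perp g$ if and only if $\operatorname{codim}(g)=2$ and the non-1 eigenvalues of $g$ are $\zeta_m^{c}$ and $\zeta_m^{-c}$ for some integer $c$.
   Context: $\zeta_m=e^{2\pi i/m}$. $G(m,1,n)$ is the group of $n\times n$ monomial matrices whose nonzero entries are $m$-th roots of unity, acting on $V=\mathbb{C}^n$; for $p\mid m$, $G(m,p,n)$ is the subgroup of elements whose nonzero entries multiply to an $(m/p)$-th root of unity. A reflection is an element of finite order fixing a hyperplane pointwise; a diagonal reflection is a diagonal matrix that is a reflection. $\operatorname{codim}(g)=n-\dim\{v\in V:gv=v\}$, and the codimension order is $a\le_\perp c$ iff $\operatorname{codim}(a)+\operatorname{codim}(a^{-1}c)=\operatorname{codim}(c)$. A diagonal matrix $g\ne 1$ whose non-1 eigenvalues (with multiplicity) are $\zeta_m^{c_1},\dots,\zeta_m^{c_k}$ is $p$-connected if $p\mid c_1+\dots+c_k$ but $p\nmid\sum_{i\in I}c_i$ for every nonempty proper subset $I\subsetneq\{1,\dots,k\}$. *)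

theory Defs
  imports "HOL-Analysis.Analysis" "HOL-Library.Multiset"
begin

definition zeta :: "nat \<Rightarrow> complex" where
  "zeta m = cis (2 * pi / real m)"

definition monomial_mat :: "complex^'n^'n \<Rightarrow> bool" where
  "monomial_mat A \<longleftrightarrow> (\<forall>i. \<exists>!j. A$i$j \<noteq> 0) \<and> (\<forall>j. \<exists>!i. A$i$j \<noteq> 0)"

text \<open>G(m,p,n) as a set of n x n complex matrices, n = CARD('n).\<close>
definition Gmpn :: "nat \<Rightarrow> nat \<Rightarrow> (complex^'n^'n) set" where
  "Gmpn m p = {A. monomial_mat A \<and> (\<forall>i j. A$i$j \<noteq> 0 \<longrightarrow> (A$i$j) ^ m = 1)
      \<and> (\<Prod>(i,j)\<in>{(i,j). A$i$j \<noteq> 0}. A$i$j) ^ (m div p) = 1}"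

definition fixed_space :: "complex^'n^'n \<Rightarrow> (complex^'n) set" where
  "fixed_space A = {v. A *v v = v}"

definition codim :: "complex^'n^'n \<Rightarrow> nat" where
  "codim A = CARD('n) - vec.dim (fixed_space A)"

definition finite_order :: "complex^'n^'n \<Rightarrow> bool" where
  "finite_order A \<longleftrightarrow> (\<exists>k>0. (((**) A) ^^ k) (mat 1) = mat 1)"

definition reflection :: "complex^'n^'n \<Rightarrow> bool" where
  "reflection A \<longleftrightarrow> finite_order A \<and> vec.dim (fixed_space A) + 1 = CARD('n)"

definition diagonal_mat :: "complex^'n^'n \<Rightarrow> bool" where
  "diagonal_mat A \<longleftrightarrow> (\<forall>i j. i \<noteq> j \<longrightarrow> A$i$j = 0)"

definition diag_reflection :: "complex^'n^'n \<Rightarrow> bool" where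
  "diag_reflection A \<longleftrightarrow> diagonal_mat A \<and> reflection A"

definition le_perp :: "complex^'n^'n \<Rightarrow> complex^'n^'n \<Rightarrow> bool" where
  "le_perp a c \<longleftrightarrow> codim a + codim (matrix_inv a ** c) = codim c"

text \<open>Multiset of the non-1 eigenvalues (with multiplicity) of a diagonal matrix:
  these are exactly its diagonal entries different from 1.\<close>
definition nontriv_eigs :: "complex^'n^'n \<Rightarrow> complex multiset" where
  "nontriv_eigs g = image_mset (\<lambda>i. g$i$i) (mset_set {i. g$i$i \<noteq> 1})"

definition p_connected :: "nat \<Rightarrow> nat \<Rightarrow> complex^'n^'n \<Rightarrow> bool" where
  "p_connected m p g \<longleftrightarrow> diagonal_mat g \<and> g \<noteq> mat 1 \<and>
     (\<exists>c :: 'n \<Rightarrow> int. (\<forall>i\<in>{i. g$i$i \<noteq> 1}. g$i$i = zeta m powi c i) \<and>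
        int p dvd (\<Sum>i\<in>{i. g$i$i \<noteq> 1}. c i) \<and>
        (\<forall>I. I \<noteq> {} \<and> I \<subset> {i. g$i$i \<noteq> 1} \<longrightarrow> \<not> int p dvd (\<Sum>i\<in>I. c i)))"

end

theory Submission
  imports Defs "HOL-Library.Real_Mod"
begin


lemma subspace_fixed: "vec.subspace (fixed_space (A::complex^'n^'n))"
  unfolding vec.subspace_def fixed_space_def
  by (auto simp: matrix_vector_right_distrib vec.scale)

lemma subspace_W: "vec.subspace {x::complex^'n. \<forall>i. i \<notin> T \<longrightarrow> x$i = 0}"
  unfolding vec.subspace_def by auto

lemma exists_in_W:
  fixes V :: "(complex^'n) set"
  assumes V: "vec.subspace V" and gt: "vec.dim V + card T > CARD('n)"
  shows "\<exists>v\<in>V. v \<noteq> 0 \<and> (\<forall>i. i \<notin> T \<longrightarrow> v$i = 0)"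
proof (rule ccontr)
  let ?W = "{x::complex^'n. \<forall>i. i \<notin> T \<longrightarrow> x$i = 0}"
  assume "\<not> ?thesis"
  then have "V \<inter> ?W = {0}" using V vec.subspace_0 by auto
  then have d0: "vec.dim (V \<inter> ?W) = 0" by simp
  have d1: "vec.dim {x + y |x y. x \<in> V \<and> y \<in> ?W} + vec.dim (V \<inter> ?W) = vec.dim V + vec.dim ?W"
    by (rule vec.dim_sums_Int[OF V subspace_W])
  have d2: "vec.dim {x + y |x y. x \<in> V \<and> y \<in> ?W} \<le> CARD('n)"
    by (rule dim_subset_UNIV_cart_gen)
  have d3: "vec.dim ?W = card T" by (rule dim_substandard_cart)
  show False using gt d0 d1 d2 d3 by linarith
qed



lemma zeta_powi_eq_1:
  assumes "0 < m"
  shows "zeta m powi c = 1 \<longleftrightarrow> int m dvd c"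
proof -
  have "zeta m powi c = cis (of_int c * (2 * pi / real m))"
    unfolding zeta_def by (rule cis_power_int)
  also have "\<dots> = 1 \<longleftrightarrow> (\<exists>k::int. of_int c * (2 * pi / real m) = of_int k * (2 * pi))"
    by (rule cis_eq_1_iff)
  also have "\<dots> \<longleftrightarrow> (\<exists>k::int. c = k * int m)"
  proof -
    have "of_int c * (2 * pi / real m) = of_int k * (2 * pi) \<longleftrightarrow> c = k * int m" for k
    proof -
      have "of_int c * (2 * pi / real m) = of_int k * (2 * pi) \<longleftrightarrow> real_of_int c = of_int k * real m"
        using assms pi_gt_zero by (auto simp: field_simps)
      also have "\<dots> \<longleftrightarrow> c = k * int m"
        by (metis of_int_eq_iff of_int_mult of_int_of_nat_eq)
      finally show ?thesis .
    qed
    then show ?thesis by simp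
  qed
  also have "\<dots> \<longleftrightarrow> int m dvd c" by (auto simp: dvd_def mult.commute)
  finally show ?thesis .
qed

lemma zeta_nonzero: "zeta m \<noteq> 0"
  unfolding zeta_def by (metis cis_neq_zero)

lemma row_mult:
  fixes s :: "complex^'n^'n"
  assumes "monomial_mat s" "s$r$j \<noteq> 0"
  shows "(s *v v)$r = s$r$j * v$j"
proof -
  have z: "k \<noteq> j \<Longrightarrow> s$r$k = 0" for k
    using assms unfolding monomial_mat_def by metis
  have "(s *v v)$r = (\<Sum>k\<in>UNIV. s$r$k * v$k)" by (simp add: matrix_vector_mult_def)
  also have "\<dots> = (\<Sum>k\<in>UNIV. if k = j then s$r$j * v$j else 0)"
    by (rule sum.cong) (auto simp: z)
  also have "\<dots> = s$r$j * v$j" by simp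
  finally show ?thesis .
qed

lemma diag_mult:
  fixes g :: "complex^'n^'n"
  assumes "diagonal_mat g"
  shows "(g *v v)$r = g$r$r * v$r"
proof -
  have "(g *v v)$r = (\<Sum>k\<in>UNIV. g$r$k * v$k)" by (simp add: matrix_vector_mult_def)
  also have "\<dots> = (\<Sum>k\<in>UNIV. if k = r then g$r$r * v$r else 0)"
    by (rule sum.cong) (use assms in \<open>auto simp: diagonal_mat_def\<close>)
  also have "\<dots> = g$r$r * v$r" by simp
  finally show ?thesis .
qed

lemma fixed_diag:
  fixes g :: "complex^'n^'n"
  assumes "diagonal_mat g"
  shows "fixed_space g = {v. \<forall>i. i \<notin> - {i. g$i$i \<noteq> 1} \<longrightarrow> v$i = 0}"
proof -
  have "g *v v = v \<longleftrightarrow> (\<forall>i. g$i$i \<noteq> 1 \<longrightarrow> v$i = 0)" for v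
  proof -
    have "g *v v = v \<longleftrightarrow> (\<forall>i. g$i$i * v$i = v$i)"
      by (simp add: vec_eq_iff diag_mult[OF assms])
    also have "\<dots> \<longleftrightarrow> (\<forall>i. g$i$i \<noteq> 1 \<longrightarrow> v$i = 0)"
      by (metis mult_cancel_right2)
    finally show ?thesis .
  qed
  then show ?thesis unfolding fixed_space_def by auto
qed

lemma codim_diag:
  fixes g :: "complex^'n^'n"
  assumes "diagonal_mat g"
  shows "codim g = card {i. g$i$i \<noteq> 1}"
     "vec.dim (fixed_space g) = CARD('n) - card {i. g$i$i \<noteq> 1}"
proof -
  have "vec.dim (fixed_space g) = card (- {i. g$i$i \<noteq> 1})"
    unfolding fixed_diag[OF assms] by (rule dim_substandard_cart)
  also have "\<dots> = CARD('n) - card {i. g$i$i \<noteq> 1}"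
    by (simp add: Compl_eq_Diff_UNIV card_Diff_subset)
  finally show "vec.dim (fixed_space g) = CARD('n) - card {i. g$i$i \<noteq> 1}" .
  then show "codim g = card {i. g$i$i \<noteq> 1}"
    unfolding codim_def
    using card_mono[of UNIV "{i. g$i$i \<noteq> 1}"] by simp
qed



lemma gmpn_diag_nonzero:
  fixes g :: "complex^'n^'n"
  assumes "g \<in> Gmpn m p" "diagonal_mat g"
  shows "g$i$i \<noteq> 0"
proof -
  from assms(1) have "monomial_mat g" by (simp add: Gmpn_def)
  then obtain j where "g$i$j \<noteq> 0" unfolding monomial_mat_def by blast
  with assms(2) show ?thesis unfolding diagonal_mat_def by metis
qed

lemma gmpn_entry_pow:
  fixes g :: "complex^'n^'n"
  assumes "g \<in> Gmpn m p" "g$i$j \<noteq> 0"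
  shows "(g$i$j)^m = 1"
  using assms by (simp add: Gmpn_def)

lemma finite_order_inv:
  fixes s :: "complex^'n^'n"
  assumes "finite_order s"
  shows "s ** matrix_inv s = mat 1" "matrix_inv s ** s = mat 1"
proof -
  from assms obtain k where k: "k > 0" "((**) s ^^ k) (mat 1) = mat 1"
    unfolding finite_order_def by blast
  then obtain j where "k = Suc j" by (cases k) auto
  with k have "s ** ((**) s ^^ j) (mat 1) = mat 1" by simp
  then have "\<exists>A'. s ** A' = mat 1 \<and> A' ** s = mat 1"
    using matrix_left_right_inverse by blast
  then have "s ** matrix_inv s = mat 1 \<and> matrix_inv s ** s = mat 1"
    unfolding matrix_inv_def by (rule someI_ex)
  then show "s ** matrix_inv s = mat 1" "matrix_inv s ** s = mat 1" by auto
qed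

lemma diag_pow:
  fixes g :: "complex^'n^'n"
  assumes "diagonal_mat g"
  shows "((**) g ^^ k) (mat 1) = (\<chi> i j. if i = j then g$i$i ^ k else 0)"
proof (induction k)
  case 0
  then show ?case by (simp add: mat_def vec_eq_iff)
next
  case (Suc k)
  have "g ** (\<chi> i j. if i = j then g$i$i ^ k else 0) = (\<chi> i j. if i = j then g$i$i ^ Suc k else 0)"
  proof -
    have "(\<Sum>l\<in>UNIV. g$i$l * (if l = j then g$l$l ^ k else 0)) = (if i = j then g$i$i ^ Suc k else 0)" for i j
    proof -
      have "(\<Sum>l\<in>UNIV. g$i$l * (if l = j then g$l$l ^ k else 0)) = g$i$j * g$j$j ^ k"
        by (simp add: if_distrib[of "\<lambda>x. _ * x"] cong: if_cong)
      also have "\<dots> = (if i = j then g$i$i ^ Suc k else 0)"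
        using assms unfolding diagonal_mat_def by auto
      finally show ?thesis .
    qed
    then show ?thesis by (simp add: matrix_matrix_mult_def vec_eq_iff)
  qed
  with Suc show ?case by simp
qed

lemma dim_hyperplane:
  fixes x :: complex and a b :: "'n::finite"
  assumes "a \<noteq> b"
  shows "vec.dim {v::complex^'n. v$a = x * v$b} + 1 = CARD('n)"
proof -
  let ?V = "{v::complex^'n. v$a = x * v$b}"
  let ?W = "{v::complex^'n. \<forall>i. i \<notin> {a} \<longrightarrow> v$i = 0}"
  have V: "vec.subspace ?V" unfolding vec.subspace_def by (auto simp: algebra_simps)
  have "?V \<inter> ?W = {0}" using assms by (auto simp: vec_eq_iff)
  then have d0: "vec.dim (?V \<inter> ?W) = 0" by simp
  have eqU: "{x + y |x y. x \<in> ?V \<and> y \<in> ?W} = UNIV"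
  proof -
    have "w \<in> {x + y |x y. x \<in> ?V \<and> y \<in> ?W}" for w :: "complex^'n"
    proof -
      define t where "t = w$a - x * w$b"
      have "w = (w - axis a t) + axis a t" by simp
      moreover have "w - axis a t \<in> ?V" using assms by (simp add: axis_def t_def)
      moreover have "axis a t \<in> ?W" by (simp add: axis_def)
      ultimately show ?thesis by blast
    qed
    then show ?thesis by blast
  qed
  have d1: "vec.dim {x + y |x y. x \<in> ?V \<and> y \<in> ?W} = CARD('n)" unfolding eqU by (rule vec_dim_card)
  have d2: "vec.dim ?W = 1" using dim_substandard_cart[of "{a}"] by simp
  have e: "vec.dim {x + y |x y. x \<in> ?V \<and> y \<in> ?W} + vec.dim (?V \<inter> ?W) = vec.dim ?V + vec.dim ?W"
    by (rule vec.dim_sums_Int[OF V subspace_W])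
  show ?thesis using e d0 d1 d2 by linarith
qed



lemma forward:
  fixes m p :: nat and g s :: "complex^'n^'n"
  assumes m0: "0 < m" and p0: "0 < p" and pm: "p dvd m"
    and gG: "g \<in> Gmpn m p"
    and pc: "p_connected m p g"
    and ndr: "\<not> diag_reflection g"
    and sG: "s \<in> Gmpn m p" and rs: "reflection s" and le: "le_perp s g"
  shows "codim g = 2 \<and> (\<exists>c::int. nontriv_eigs g = {# zeta m powi c, zeta m powi (-c) #})"
proof -
  define S where "S = {i. g$i$i \<noteq> 1}"
  from pc have gd: "diagonal_mat g" and g1: "g \<noteq> mat 1" unfolding p_connected_def by auto
  have "\<exists>c::'n \<Rightarrow> int. (\<forall>i\<in>S. g$i$i = zeta m powi c i) \<and> int p dvd (\<Sum>i\<in>S. c i) \<and>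
        (\<forall>I. I \<noteq> {} \<and> I \<subset> S \<longrightarrow> \<not> int p dvd (\<Sum>i\<in>I. c i))"
    using pc unfolding p_connected_def S_def by (rule conjunct2[OF conjunct2])
  then obtain c :: "'n \<Rightarrow> int" where cc: "(\<forall>i\<in>S. g$i$i = zeta m powi c i) \<and> int p dvd (\<Sum>i\<in>S. c i) \<and>
        (\<forall>I. I \<noteq> {} \<and> I \<subset> S \<longrightarrow> \<not> int p dvd (\<Sum>i\<in>I. c i))" by (rule exE)
  have cz: "\<And>i. i \<in> S \<Longrightarrow> g$i$i = zeta m powi c i" using cc by simp
  have cs: "int p dvd (\<Sum>i\<in>S. c i)" using cc by simp
  have cI: "\<And>I. I \<noteq> {} \<Longrightarrow> I \<subset> S \<Longrightarrow> \<not> int p dvd (\<Sum>i\<in>I. c i)" using cc by blast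
  have gnz: "\<And>i. g$i$i \<noteq> 0" using gmpn_diag_nonzero[OF gG gd] .
  have gmult: "\<And>v r. (g *v v)$r = g$r$r * v$r" using diag_mult[OF gd] .
  have smono: "monomial_mat s" using sG by (simp add: Gmpn_def)
  define k where "k = card S"
  have codg: "codim g = k" unfolding k_def S_def by (rule codim_diag[OF gd])
  have Sne: "S \<noteq> {}"
  proof
    assume "S = {}"
    then have "g = mat 1" using gd unfolding S_def diagonal_mat_def
      by (auto simp: vec_eq_iff mat_def)
    with g1 show False by simp
  qed
  then have k1: "k \<ge> 1" unfolding k_def by (simp add: Suc_leI card_gt_0_iff)
  have kn: "k \<le> CARD('n)" unfolding k_def by (simp add: card_mono)
  from rs have fos: "finite_order s" and dFs: "vec.dim (fixed_space s) + 1 = CARD('n)"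
    unfolding reflection_def by auto
  have cods: "codim s = 1" using dFs unfolding codim_def by simp
  define h where "h = matrix_inv s ** g"
  have codh: "codim h = k - 1" using le cods codg unfolding le_perp_def h_def by simp
  have dFh: "vec.dim (fixed_space h) + k = CARD('n) + 1"
    using codh k1 dim_subset_UNIV_cart_gen[of "fixed_space h"] unfolding codim_def by linarith
  have sinv: "s ** matrix_inv s = mat 1" using finite_order_inv[OF fos] by simp
  have hfix: "g$r$r * v$r = (s *v v)$r" if "v \<in> fixed_space h" for v r
  proof -
    have "h *v v = v" using that unfolding fixed_space_def by simp
    then have "s *v (h *v v) = s *v v" by simp
    then have "g *v v = s *v v" unfolding h_def
      by (simp add: matrix_vector_mul_assoc matrix_mul_assoc sinv)
    then show ?thesis by (metis gmult)
  qed
  obtain v0 where v0F: "v0 \<in> fixed_space h" and v0nz: "v0 \<noteq> 0"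
    and v0S: "\<And>i. i \<notin> S \<Longrightarrow> v0$i = 0"
    using exists_in_W[OF subspace_fixed, of h S] dFh unfolding k_def by auto
  have sfix: "(s *v v)$r = v$r" if "v \<in> fixed_space s" for v r
    using that unfolding fixed_space_def by simp
  have two: "\<exists>v. v \<in> fixed_space s \<and> v \<noteq> 0 \<and> (\<forall>i. i \<notin> {a, b} \<longrightarrow> v$i = 0)"
    if "a \<noteq> b" for a b
  proof -
    have "card {a, b} = 2" using that by simp
    then show ?thesis using exists_in_W[OF subspace_fixed, of s "{a,b}"] dFs by auto
  qed
  have cpow: "(zeta m powi c i) ^ (m div p) = 1 \<Longrightarrow> int p dvd c i" for i
  proof -
    assume a: "(zeta m powi c i) ^ (m div p) = 1"
    have "zeta m powi (c i * int (m div p)) = 1"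
      using a by (simp add: power_int_mult power_int_of_nat)
    then have "int m dvd c i * int (m div p)" using zeta_powi_eq_1[OF m0] by simp
    moreover have "int m = int p * int (m div p)" using pm by (metis dvd_mult_div_cancel of_nat_mult)
    moreover have "m div p \<noteq> 0" using pm m0 p0 by (metis dvd_mult_div_cancel mult_0_right not_gr0)
    ultimately have "int p * int (m div p) dvd c i * int (m div p)" by simp
    then show "int p dvd c i" using \<open>m div p \<noteq> 0\<close> by (subst (asm) dvd_mult_cancel_right) auto
  qed
  show ?thesis
  proof (cases "diagonal_mat s")
    case True
    note sd = True
    have snz: "\<And>i. s$i$i \<noteq> 0" using gmpn_diag_nonzero[OF sG sd] .
    have smult: "\<And>v r. (s *v v)$r = s$r$r * v$r" using diag_mult[OF sd] .
    obtain a0 where a0: "s$a0$a0 \<noteq> 1"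
    proof (rule ccontr)
      assume "\<not> thesis"
      then have "\<forall>i. s$i$i = 1" using that by blast
      then have "s = mat 1" using sd unfolding diagonal_mat_def
        by (auto simp: vec_eq_iff mat_def)
      then have "fixed_space s = UNIV" unfolding fixed_space_def by simp
      then show False using dFs vec_dim_card[where 'a=complex and 'n='n] by simp
    qed
    have s1: "s$r$r = 1" if ra: "r \<noteq> a0" for r
    proof (rule ccontr)
      assume nr: "s$r$r \<noteq> 1"
      obtain v where v: "v \<in> fixed_space s" "v \<noteq> 0" "\<forall>i. i \<notin> {a0, r} \<longrightarrow> v$i = 0"
        using two[of a0 r] ra by auto
      have "v$a0 = 0" using sfix[OF v(1), of a0] smult[of v a0] a0
        by (metis mult_cancel_right2)
      moreover have "v$r = 0" using sfix[OF v(1), of r] smult[of v r] nr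
        by (metis mult_cancel_right2)
      ultimately have "v = 0" using v(3) by (auto simp: vec_eq_iff)
      with v(2) show False by simp
    qed
    have v0r: "v0$r = 0" if "r \<noteq> a0" for r
    proof (cases "r \<in> S")
      case True
      have e1: "g$r$r * v0$r = v0$r" using hfix[OF v0F, of r] smult[of v0 r] s1[OF that] by simp
      have "g$r$r \<noteq> 1" using True unfolding S_def by simp
      then show ?thesis using e1 by (metis mult_cancel_right2)
    next
      case False then show ?thesis using v0S by simp
    qed
    have va0: "v0$a0 \<noteq> 0"
    proof
      assume "v0$a0 = 0"
      then have "v0 = 0" using v0r by (metis vec_eq_iff zero_index)
      with v0nz show False by simp
    qed
    then have a0S: "a0 \<in> S" using v0S by blast
    have gs: "g$a0$a0 = s$a0$a0"
      using hfix[OF v0F, of a0] smult[of v0 a0] va0 by simp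
    have sset: "{(i,j). s$i$j \<noteq> 0} = (\<lambda>r. (r,r)) ` UNIV"
      using sd snz unfolding diagonal_mat_def by auto
    have "(\<Prod>(i,j)\<in>{(i,j). s$i$j \<noteq> 0}. s$i$j) = (\<Prod>r\<in>UNIV. s$r$r)"
      unfolding sset by (subst prod.reindex) (auto simp: inj_on_def)
    also have "\<dots> = s$a0$a0 * (\<Prod>r\<in>UNIV - {a0}. s$r$r)"
      by (simp add: prod.remove)
    also have "(\<Prod>r\<in>UNIV - {a0}. s$r$r) = 1" using s1 by (intro prod.neutral) auto
    finally have "(\<Prod>(i,j)\<in>{(i,j). s$i$j \<noteq> 0}. s$i$j) = s$a0$a0" by simp
    then have "(s$a0$a0) ^ (m div p) = 1" using sG by (simp add: Gmpn_def)
    then have "(zeta m powi c a0) ^ (m div p) = 1" using gs cz[OF a0S] by simp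
    then have pa0: "int p dvd c a0" by (rule cpow)
    show ?thesis
    proof (cases "S = {a0}")
      case True
      have "diag_reflection g"
        unfolding diag_reflection_def reflection_def finite_order_def
      proof (intro conjI exI[of _ m])
        show "diagonal_mat g" by (rule gd)
        show "0 < m" by (rule m0)
        show "((**) g ^^ m) (mat 1) = mat 1"
          unfolding diag_pow[OF gd] by (unfold mat_def vec_eq_iff) (use gmpn_entry_pow[OF gG gnz] in simp)
        show "vec.dim (fixed_space g) + 1 = CARD('n)"
          using codim_diag(2)[OF gd] True kn k1 unfolding S_def k_def by simp
      qed
      with ndr show ?thesis by simp
    next
      case False
      then have "{a0} \<subset> S" using a0S by auto
      then have "\<not> int p dvd (\<Sum>i\<in>{a0}. c i)" using cI by blast
      with pa0 show ?thesis by simp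
    qed
  next
    case False
    then obtain a b where ab: "a \<noteq> b" "s$a$b \<noteq> 0" unfolding diagonal_mat_def by blast
    have rowv: "(s *v v)$r = s$r$j * v$j" if "s$r$j \<noteq> 0" for v r j
      using row_mult[OF smono that] .
    have colu: "i = i'" if "s$i$j \<noteq> 0" "s$i'$j \<noteq> 0" for i i' j
      using smono that unfolding monomial_mat_def by metis
    have sba: "s$b$a \<noteq> 0"
    proof -
      obtain c' where c': "s$b$c' \<noteq> 0" using smono unfolding monomial_mat_def by blast
      have "c' \<noteq> b" using colu[OF ab(2)] c' ab(1) by blast
      show ?thesis
      proof (cases "c' = a")
        case True then show ?thesis using c' by simp
      next
        case False
        obtain v where v: "v \<in> fixed_space s" "v \<noteq> 0" "\<forall>i. i \<notin> {b, c'} \<longrightarrow> v$i = 0"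
          using two[of b c'] \<open>c' \<noteq> b\<close> by auto
        have "v$a = 0" using v(3) ab(1) False by auto
        then have "v$b = 0" using sfix[OF v(1), of a] rowv[OF ab(2), of v] ab(2) by simp
        then have "v$c' = 0" using sfix[OF v(1), of b] rowv[OF c', of v] c' by simp
        then have "v = 0" using v(3) \<open>v$b = 0\<close> by (auto simp: vec_eq_iff)
        with v(2) show ?thesis by simp
      qed
    qed
    have sd1: "s$d$d = 1" if "d \<noteq> a" "d \<noteq> b" for d
    proof (rule ccontr)
      assume nd: "s$d$d \<noteq> 1"
      obtain e where e: "s$d$e \<noteq> 0" using smono unfolding monomial_mat_def by blast
      have eb: "e \<noteq> b" using colu[OF ab(2)] e that by blast
      have ea: "e \<noteq> a" using colu[OF sba] e that by blast
      obtain v where v: "v \<in> fixed_space s" "v \<noteq> 0" "\<forall>i. i \<notin> {b, e} \<longrightarrow> v$i = 0"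
        using two[of b e] eb by auto
      have "v$a = 0" using v(3) ab(1) ea by auto
      then have vb: "v$b = 0" using sfix[OF v(1), of a] rowv[OF ab(2), of v] ab(2) by simp
      have fd: "s$d$e * v$e = v$d" using sfix[OF v(1), of d] rowv[OF e, of v] by simp
      have ve: "v$e = 0"
      proof (cases "e = d")
        case True
        then show ?thesis using fd nd by (metis mult_cancel_right2)
      next
        case False
        then have "v$d = 0" using v(3) that(2) by auto
        then show ?thesis using fd e by simp
      qed
      have "v = 0" using v(3) vb ve by (auto simp: vec_eq_iff)
      with v(2) show False by simp
    qed
    have sdv: "(s *v v)$d = v$d" if "d \<noteq> a" "d \<noteq> b" for v d
      using rowv[of d d v] sd1[OF that] by simp
    have sav: "(s *v v)$a = s$a$b * v$b" for v using rowv[OF ab(2)] .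
    have sbv: "(s *v v)$b = s$b$a * v$a" for v using rowv[OF sba] .
    have xy: "s$a$b * s$b$a = 1"
    proof (rule ccontr)
      assume nxy: "s$a$b * s$b$a \<noteq> 1"
      obtain v where v: "v \<in> fixed_space s" "v \<noteq> 0" "\<forall>i. i \<notin> {a, b} \<longrightarrow> v$i = 0"
        using two[of a b] ab(1) by auto
      have fa: "s$a$b * v$b = v$a" using sfix[OF v(1), of a] sav[of v] by simp
      have fb: "s$b$a * v$a = v$b" using sfix[OF v(1), of b] sbv[of v] by simp
      have "(s$a$b * s$b$a) * v$a = v$a" using fa fb by (simp add: mult.assoc)
      then have va: "v$a = 0" using nxy by (metis mult_cancel_right2)
      then have "v$b = 0" using fb by simp
      then have "v = 0" using v(3) va by (auto simp: vec_eq_iff)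
      with v(2) show False by simp
    qed
    have v0d: "v0$d = 0" if "d \<noteq> a" "d \<noteq> b" for d
    proof (cases "d \<in> S")
      case True
      have e1: "g$d$d * v0$d = v0$d" using hfix[OF v0F, of d] sdv[OF that, of v0] by simp
      have "g$d$d \<noteq> 1" using True unfolding S_def by simp
      then show ?thesis using e1 by (metis mult_cancel_right2)
    next
      case False then show ?thesis using v0S by simp
    qed
    have ha: "g$a$a * v0$a = s$a$b * v0$b" using hfix[OF v0F, of a] sav[of v0] by simp
    have hb: "g$b$b * v0$b = s$b$a * v0$a" using hfix[OF v0F, of b] sbv[of v0] by simp
    have notboth: "v0$a \<noteq> 0 \<or> v0$b \<noteq> 0"
    proof (rule ccontr)
      assume "\<not> ?thesis"
      then have "v0 = 0" using v0d by (metis vec_eq_iff zero_index)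
      with v0nz show False by simp
    qed
    have aS: "a \<in> S"
    proof (rule ccontr)
      assume "a \<notin> S"
      then have "v0$a = 0" using v0S by simp
      then have "v0$b = 0" using hb gnz[of b] by simp
      with notboth \<open>v0$a = 0\<close> show False by simp
    qed
    have bS: "b \<in> S"
    proof (rule ccontr)
      assume "b \<notin> S"
      then have "v0$b = 0" using v0S by simp
      then have "v0$a = 0" using ha gnz[of a] by simp
      with notboth \<open>v0$b = 0\<close> show False by simp
    qed
    have gab: "g$a$a * g$b$b = 1"
    proof (rule ccontr)
      assume ng: "g$a$a * g$b$b \<noteq> 1"
      have "(g$a$a * g$b$b) * v0$a = v0$a"
      proof -
        have "(g$a$a * g$b$b) * v0$a = g$b$b * (g$a$a * v0$a)" by simp
        also have "\<dots> = s$a$b * (g$b$b * v0$b)" using ha by simp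
        also have "\<dots> = (s$a$b * s$b$a) * v0$a" using hb by simp
        finally show ?thesis using xy by simp
      qed
      then have va: "v0$a = 0" using ng by (metis mult_cancel_right2)
      then have "v0$b = 0" using hb gnz[of b] by simp
      with notboth va show False by simp
    qed
    have "zeta m powi (c a + c b) = 1"
      using gab cz[OF aS] cz[OF bS] by (simp add: power_int_add zeta_nonzero)
    then have "int m dvd c a + c b" using zeta_powi_eq_1[OF m0] by simp
    then have pab: "int p dvd (\<Sum>i\<in>{a,b}. c i)" using pm ab(1)
      by (simp add: dvd_trans[of "int p" "int m"])
    have Sab: "S = {a, b}"
    proof (rule ccontr)
      assume "S \<noteq> {a, b}"
      then have "{a,b} \<subset> S" using aS bS by auto
      then show False using cI[of "{a,b}"] pab by simp
    qed
    have "codim g = 2" using codg Sab ab(1) unfolding k_def by simp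
    moreover have "nontriv_eigs g = {# zeta m powi (c a), zeta m powi (- c a) #}"
    proof -
      have gb: "g$b$b = zeta m powi (- c a)"
      proof -
        have nz: "zeta m powi c a \<noteq> 0" by (simp add: zeta_nonzero)
        show ?thesis using gab cz[OF aS] nz by (simp add: power_int_minus field_simps)
      qed
      have "nontriv_eigs g = {# g$a$a, g$b$b #}"
        unfolding nontriv_eigs_def S_def[symmetric] Sab using ab(1) by simp
      then show ?thesis using gb cz[OF aS] by simp
    qed
    ultimately show ?thesis by blast
  qed
qed



lemma backward:
  fixes m p :: nat and g :: "complex^'n^'n" and c :: int
  assumes m0: "0 < m" and gG: "g \<in> Gmpn m p" and gd: "diagonal_mat g"
    and cod: "codim g = 2"
    and ne: "nontriv_eigs g = {# zeta m powi c, zeta m powi (-c) #}"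
  shows "\<exists>s\<in>Gmpn m p. reflection s \<and> le_perp s g"
proof -
  define S where "S = {i. g$i$i \<noteq> 1}"
  have "card S = 2" using codim_diag(1)[OF gd] cod unfolding S_def by simp
  then obtain a b where Sab: "S = {a, b}" and ab: "a \<noteq> b" by (auto simp: card_2_iff)
  have gnz: "\<And>i. g$i$i \<noteq> 0" using gmpn_diag_nonzero[OF gG gd] .
  define x where "x = g$a$a"
  define y where "y = g$b$b"
  have xnz: "x \<noteq> 0" and ynz: "y \<noteq> 0" using gnz unfolding x_def y_def by auto
  have xm: "x^m = 1" and ym: "y^m = 1" unfolding x_def y_def using gmpn_entry_pow[OF gG gnz] by auto
  have g1: "g$r$r = 1" if "r \<noteq> a" "r \<noteq> b" for r using that Sab unfolding S_def by auto
  have "(\<Prod>i\<in>S. g$i$i) = prod_mset (nontriv_eigs g)"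
    unfolding nontriv_eigs_def S_def by (rule prod_unfold_prod_mset)
  also have "\<dots> = zeta m powi c * zeta m powi (-c)" using ne by simp
  also have "\<dots> = 1" by (simp add: power_int_minus zeta_nonzero)
  finally have xy: "x * y = 1" using ab unfolding Sab x_def y_def by simp
  define s :: "complex^'n^'n" where "s = (\<chi> r j. if r = a then (if j = b then x else 0)
      else if r = b then (if j = a then y else 0) else (if j = r then 1 else 0))"
  have sv: "s *v v = (\<chi> r. if r = a then x * v$b else if r = b then y * v$a else v$r)" for v
  proof -
    have "(\<Sum>j\<in>UNIV. s$r$j * v$j) = (if r = a then x * v$b else if r = b then y * v$a else v$r)" for r
      unfolding s_def using ab by (auto simp: if_distrib[of "\<lambda>z. z * _"] cong: if_cong)
    then show ?thesis by (simp add: matrix_vector_mult_def vec_eq_iff)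
  qed
  have gv: "g *v v = (\<chi> r. g$r$r * v$r)" for v using diag_mult[OF gd] by (simp add: vec_eq_iff)
  have ss: "s ** s = mat 1"
  proof -
    have "(s ** s) *v v = mat 1 *v v" for v
    proof -
      have "(s ** s) *v v = s *v (s *v v)" by (simp add: matrix_vector_mul_assoc)
      also have "\<dots> = v" using ab xy by (simp add: sv vec_eq_iff mult.assoc[symmetric] mult.commute[of y x])
      finally show ?thesis by simp
    qed
    then show ?thesis using matrix_eq by blast
  qed
  have Fs: "fixed_space s = {v. v$a = x * v$b}"
  proof -
    have "s *v v = v \<longleftrightarrow> v$a = x * v$b" for v
    proof
      assume "s *v v = v"
      then have "(s *v v)$a = v$a" by simp
      then show "v$a = x * v$b" by (simp add: sv)
    next
      assume h: "v$a = x * v$b"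
      have "y * v$a = v$b" using h xy by (simp add: mult.assoc[symmetric] mult.commute[of y x])
      then show "s *v v = v" using h ab by (simp add: sv vec_eq_iff)
    qed
    then show ?thesis unfolding fixed_space_def by auto
  qed
  have refl: "reflection s"
    unfolding reflection_def finite_order_def
  proof (intro conjI exI[of _ 2])
    show "(0::nat) < 2" by simp
    show "((**) s ^^ 2) (mat 1) = mat 1" by (simp add: numeral_2_eq_2 ss)
    show "vec.dim (fixed_space s) + 1 = CARD('n)" unfolding Fs by (rule dim_hyperplane[OF ab])
  qed
  have cods: "codim s = 1" using refl unfolding reflection_def codim_def by (elim conjE) linarith
  have minv: "matrix_inv s = s"
  proof -
    have "s ** matrix_inv s = mat 1 \<and> matrix_inv s ** s = mat 1"
      unfolding matrix_inv_def by (rule someI[of _ s]) (simp add: ss)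
    then have "matrix_inv s ** s = mat 1" by simp
    then have "matrix_inv s ** (s ** s) = s" by (simp add: matrix_mul_assoc)
    then show ?thesis by (simp add: ss)
  qed
  have Fsg: "fixed_space (s ** g) = {v. v$a = 1 * v$b}"
  proof -
    have "(s ** g) *v v = v \<longleftrightarrow> v$a = 1 * v$b" for v
    proof -
      have e: "(s ** g) *v v = (\<chi> r. if r = a then v$b else if r = b then v$a else v$r)"
      proof -
        have "(s ** g) *v v = s *v (g *v v)" by (simp add: matrix_vector_mul_assoc)
        also have "\<dots> = (\<chi> r. if r = a then v$b else if r = b then v$a else v$r)"
        proof -
          have xg: "x * g$b$b = 1" "y * g$a$a = 1" using xy unfolding x_def y_def by (auto simp: mult.commute)
          show ?thesis using ab xg g1
            by (simp add: sv gv vec_eq_iff mult.assoc[symmetric])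
        qed
        finally show ?thesis .
      qed
      show ?thesis unfolding e using ab by (auto simp: vec_eq_iff)
    qed
    then show ?thesis unfolding fixed_space_def by auto
  qed
  have codsg: "codim (s ** g) = 1"
    using dim_hyperplane[OF ab, of 1] unfolding codim_def Fsg by simp
  have le: "le_perp s g" unfolding le_perp_def minv cods codsg cod by simp
  define \<tau> where "\<tau> i = (if i = a then b else if i = b then a else i)" for i
  have snz: "s$i$j \<noteq> 0 \<longleftrightarrow> j = \<tau> i" for i j
    unfolding s_def \<tau>_def using xnz ynz ab by auto
  have tt: "\<tau> (\<tau> i) = i" for i unfolding \<tau>_def by auto
  have mono: "monomial_mat s"
    unfolding monomial_mat_def snz by (metis tt)
  have ent: "(s$i$j)^m = 1" if "s$i$j \<noteq> 0" for i j
    using that xm ym unfolding s_def by (auto split: if_splits)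
  have sset: "{(i,j). s$i$j \<noteq> 0} = (\<lambda>i. (i, \<tau> i)) ` UNIV" using snz by auto
  define f where "f i = (if i = a then x else if i = b then y else 1)" for i
  have "(\<Prod>(i,j)\<in>{(i,j). s$i$j \<noteq> 0}. s$i$j) = (\<Prod>i\<in>UNIV. s$i$(\<tau> i))"
    unfolding sset by (subst prod.reindex) (auto simp: inj_on_def)
  also have "\<dots> = (\<Prod>i\<in>UNIV. f i)"
    by (rule prod.cong) (auto simp: s_def \<tau>_def f_def)
  also have "\<dots> = f a * (f b * (\<Prod>i\<in>UNIV - {a} - {b}. f i))"
    using ab by (simp add: prod.remove[of UNIV a] prod.remove[of "UNIV - {a}" b])
  also have "(\<Prod>i\<in>UNIV - {a} - {b}. f i) = 1" by (rule prod.neutral) (auto simp: f_def)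
  finally have pr: "(\<Prod>(i,j)\<in>{(i,j). s$i$j \<noteq> 0}. s$i$j) = 1"
    using ab xy unfolding f_def by simp
  have "s \<in> Gmpn m p" unfolding Gmpn_def using mono ent pr by auto
  then show ?thesis using refl le by blast
qed


theorem mainTheorem6:
  fixes m p :: nat and g :: "complex^'n^'n"
  assumes "0 < m" and "0 < p" and "p dvd m"
    and "g \<in> Gmpn m p"
    and "p_connected m p g"
    and "\<not> diag_reflection g"
  shows "(\<exists>s\<in>Gmpn m p. reflection s \<and> le_perp s g) \<longleftrightarrow>
         (codim g = 2 \<and> (\<exists>c::int. nontriv_eigs g = {# zeta m powi c, zeta m powi (-c) #}))"
proof
  assume "\<exists>s\<in>Gmpn m p. reflection s \<and> le_perp s g"
  then obtain s where "s \<in> Gmpn m p" "reflection s" "le_perp s g" by blast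
  then show "codim g = 2 \<and> (\<exists>c::int. nontriv_eigs g = {# zeta m powi c, zeta m powi (-c) #})"
    using forward[OF assms] by blast
next
  assume h: "codim g = 2 \<and> (\<exists>c::int. nontriv_eigs g = {# zeta m powi c, zeta m powi (-c) #})"
  then obtain c :: int where "nontriv_eigs g = {# zeta m powi c, zeta m powi (-c) #}" by blast
  moreover have "diagonal_mat g" using assms(5) unfolding p_connected_def by simp
  ultimately show "\<exists>s\<in>Gmpn m p. reflection s \<and> le_perp s g"
    using backward[OF assms(1) assms(4)] h by blast
qed

end
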